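(* Let $(X,\sigma)$ be a complete metric-like space, and let $\varphi:(0,\infty)\to(1,\infty)$ be a function such that for every sequence $\{t_n\}\subset(0,\infty)$, $\varphi(t_n)\to 1$ from above implies $t_n\to0$. Suppose $S,T:X\to X$ are onto mappings such that $\sigma(Tx,Sy)\geq \varphi(\sigma(x,y))\,\sigma(x,y)$ for all $x,y\in X$ with $\sigma(x,y)>0$. Then $T$ and $S$ have a common fixed point.
   Context: A metric-like on $X$ is a map $\sigma:X\times X\to[0,\infty)$ such that for all $x,y,z\in X$: $\sigma(x,y)=0\Rightarrow x=y$; $\sigma(x,y)=\sigma(y,x)$; $\sigma(x,z)\le\sigma(x,y)+\sigma(y,z)$. A sequence $\{x_n\}$ converges to $x$ if $\lim_n\sigma(x_n,x)=\sigma(x,x)$; it is Cauchy if $\lim_{n,m}\sigma(x_n,x_m)$ exists and is finite; $(X,\sigma)$ is complete if every Cauchy sequence $\{x_n\}$ converges to some $x$ with $\lim_{n,m}\sigma(x_n,x_m)=\sigma(x,x)=\lim_n\sigma(x_n,x)$. *)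

theory Defs
  imports "HOL-Analysis.Analysis"
begin

definition metric_like :: "('a \<Rightarrow> 'a \<Rightarrow> real) \<Rightarrow> bool" where
  "metric_like \<sigma> \<longleftrightarrow>
     (\<forall>x y. 0 \<le> \<sigma> x y) \<and>
     (\<forall>x y. \<sigma> x y = 0 \<longrightarrow> x = y) \<and>
     (\<forall>x y. \<sigma> x y = \<sigma> y x) \<and>
     (\<forall>x y z. \<sigma> x z \<le> \<sigma> x y + \<sigma> y z)"

definition ml_double_limit :: "('a \<Rightarrow> 'a \<Rightarrow> real) \<Rightarrow> (nat \<Rightarrow> 'a) \<Rightarrow> real \<Rightarrow> bool" where
  "ml_double_limit \<sigma> x L \<longleftrightarrow>
     (\<forall>e>0. \<exists>N. \<forall>n\<ge>N. \<forall>m\<ge>N. \<bar>\<sigma> (x n) (x m) - L\<bar> < e)"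

definition ml_converges :: "('a \<Rightarrow> 'a \<Rightarrow> real) \<Rightarrow> (nat \<Rightarrow> 'a) \<Rightarrow> 'a \<Rightarrow> bool" where
  "ml_converges \<sigma> x p \<longleftrightarrow> ((\<lambda>n. \<sigma> (x n) p) \<longlonglongrightarrow> \<sigma> p p)"

definition ml_Cauchy :: "('a \<Rightarrow> 'a \<Rightarrow> real) \<Rightarrow> (nat \<Rightarrow> 'a) \<Rightarrow> bool" where
  "ml_Cauchy \<sigma> x \<longleftrightarrow> (\<exists>L. ml_double_limit \<sigma> x L)"

definition ml_complete :: "('a \<Rightarrow> 'a \<Rightarrow> real) \<Rightarrow> bool" where
  "ml_complete \<sigma> \<longleftrightarrow>
     (\<forall>x. ml_Cauchy \<sigma> x \<longrightarrow>
        (\<exists>p. ml_double_limit \<sigma> x (\<sigma> p p) \<and> ml_converges \<sigma> x p))"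

end

theory Submission
  imports Defs
begin

lemma phi_bound:
  fixes \<phi> :: "real \<Rightarrow> real"
  assumes P: "\<forall>t>0. \<phi> t > 1"
    and H: "\<forall>t :: nat \<Rightarrow> real. (\<forall>n. t n > 0) \<longrightarrow>
            filterlim (\<lambda>n. \<phi> (t n)) (at_right 1) sequentially \<longrightarrow> t \<longlonglongrightarrow> 0"
    and e: "\<epsilon> > 0"
  shows "\<exists>c>1. \<forall>t\<ge>\<epsilon>. \<phi> t \<ge> c"
proof (rule ccontr)
  assume A: "\<not> ?thesis"
  have "\<forall>n::nat. \<exists>t\<ge>\<epsilon>. \<phi> t < 1 + inverse (real (Suc n))"
  proof
    fix n :: nat
    have "1 + inverse (real (Suc n)) > 1" by simp
    then show "\<exists>t\<ge>\<epsilon>. \<phi> t < 1 + inverse (real (Suc n))" using A by (meson not_le)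
  qed
  then obtain t where t: "\<And>n. t n \<ge> \<epsilon> \<and> \<phi> (t n) < 1 + inverse (real (Suc n))" by metis
  have pos: "\<forall>n. t n > 0" using t e by (meson less_le_trans)
  have gt: "\<And>n. \<phi> (t n) > 1" using pos P by blast
  have l1: "(\<lambda>n. 1 + inverse (real (Suc n))) \<longlonglongrightarrow> 1"
    using tendsto_add[OF tendsto_const LIMSEQ_inverse_real_of_nat, of 1] by simp
  have lim: "(\<lambda>n. \<phi> (t n)) \<longlonglongrightarrow> 1"
    apply (rule tendsto_sandwich[of "\<lambda>n. 1" _ _ "\<lambda>n. 1 + inverse (real (Suc n))"])
    using gt t l1 by (auto intro!: always_eventually less_imp_le)
  have "filterlim (\<lambda>n. \<phi> (t n)) (at_right 1) sequentially"
    unfolding filterlim_at using lim gt by (auto simp: less_imp_neq[symmetric])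
  then have "t \<longlonglongrightarrow> 0" using H pos by blast
  then have "eventually (\<lambda>n. t n < \<epsilon>) sequentially" using e by (rule order_tendstoD(2))
  then obtain n where "t n < \<epsilon>" by (meson eventually_sequentially order_refl)
  then show False using t by (meson not_le)
qed

theorem corollary2p6:
  fixes \<sigma> :: "'a \<Rightarrow> 'a \<Rightarrow> real"
    and \<phi> :: "real \<Rightarrow> real"
    and S T :: "'a \<Rightarrow> 'a"
  assumes "metric_like \<sigma>"
    and "ml_complete \<sigma>"
    and "\<forall>t>0. \<phi> t > 1"
    and "\<forall>t :: nat \<Rightarrow> real. (\<forall>n. t n > 0) \<longrightarrow>
            filterlim (\<lambda>n. \<phi> (t n)) (at_right 1) sequentially \<longrightarrow> t \<longlonglongrightarrow> 0"
    and "surj S" and "surj T"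
    and "\<forall>x y. \<sigma> x y > 0 \<longrightarrow> \<sigma> (T x) (S y) \<ge> \<phi> (\<sigma> x y) * \<sigma> x y"
  shows "\<exists>x. T x = x \<and> S x = x"
proof -
  note PB = phi_bound[OF assms(3) assms(4)]
  have M: "(\<forall>x y. 0 \<le> \<sigma> x y) \<and>
     (\<forall>x y. \<sigma> x y = 0 \<longrightarrow> x = y) \<and>
     (\<forall>x y. \<sigma> x y = \<sigma> y x) \<and>
     (\<forall>x y z. \<sigma> x z \<le> \<sigma> x y + \<sigma> y z)"
    using assms(1) unfolding metric_like_def .
  have nn: "\<And>x y. 0 \<le> \<sigma> x y" by (rule conjunct1[OF M, rule_format])
  have z: "\<And>x y. \<sigma> x y = 0 \<Longrightarrow> x = y" by (rule conjunct1[OF conjunct2[OF M], rule_format])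
  have sym: "\<And>x y. \<sigma> x y = \<sigma> y x" by (rule conjunct1[OF conjunct2[OF conjunct2[OF M]], rule_format])
  have tri: "\<And>x y z. \<sigma> x y + \<sigma> y z \<ge> \<sigma> x z" by (rule conjunct2[OF conjunct2[OF conjunct2[OF M]], rule_format])
  have Hw: "\<sigma> (T a) (S b) \<ge> \<sigma> a b" for a b
  proof (cases "\<sigma> a b > 0")
    case True
    then have "\<phi> (\<sigma> a b) * \<sigma> a b \<ge> 1 * \<sigma> a b" using assms(3)
      by (intro mult_right_mono) (auto intro: less_imp_le)
    moreover have "\<phi> (\<sigma> a b) * \<sigma> a b \<le> \<sigma> (T a) (S b)" using assms(7) True by blast
    ultimately show ?thesis by linarith
  next
    case False
    then show ?thesis using nn[of a b] nn[of "T a" "S b"] by linarith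
  qed
  obtain x0 :: 'a where True by blast
  define x where "x = rec_nat x0 (\<lambda>n y. if even n then inv T y else inv S y)"
  have x0: "x 0 = x0" and xS: "x (Suc n) = (if even n then inv T (x n) else inv S (x n))" for n
    unfolding x_def by simp_all
  have xT: "even n \<Longrightarrow> T (x (Suc n)) = x n" for n
    using xS[of n] surj_f_inv_f[OF assms(6)] by simp
  have xSS: "odd n \<Longrightarrow> S (x (Suc n)) = x n" for n
    using xS[of n] surj_f_inv_f[OF assms(5)] by simp
  have K: "\<sigma> (x i) (x j) \<ge> \<sigma> (x (Suc i)) (x (Suc j)) \<and>
      (\<sigma> (x (Suc i)) (x (Suc j)) > 0 \<longrightarrow>
         \<sigma> (x i) (x j) \<ge> \<phi> (\<sigma> (x (Suc i)) (x (Suc j))) * \<sigma> (x (Suc i)) (x (Suc j)))"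
    if "odd (i + j)" for i j
  proof (cases "even i")
    case True
    then have "odd j" using that by simp
    then show ?thesis using True xT[of i] xSS[of j] Hw[of "x (Suc i)" "x (Suc j)"] assms(7) by metis
  next
    case False
    then have "even j" using that by simp
    then show ?thesis using False xT[of j] xSS[of i] Hw[of "x (Suc j)" "x (Suc i)"] assms(7) sym
      by metis
  qed
  define d where "d n = \<sigma> (x n) (x (Suc n))" for n
  have dmono: "d (Suc n) \<le> d n" for n
    using K[of n "Suc n"] unfolding d_def by simp
  have dmono2: "m \<le> n \<Longrightarrow> d n \<le> d m" for m n
    by (induction n rule: dec_induct) (use dmono order_trans in blast)+
  have dsmall: "\<exists>N. d N < \<eta>" if eta0: "\<eta> > 0" for \<eta>
  proof (rule ccontr)
    assume A: "\<not> ?thesis"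
    then have ge: "d n \<ge> \<eta>" for n by (meson not_le)
    obtain c where c: "c > 1" "\<And>t. t \<ge> \<eta> \<Longrightarrow> \<phi> t \<ge> c" using PB[OF eta0] by blast
    have step: "d n \<ge> c * d (Suc n)" for n
    proof -
      have p: "d (Suc n) > 0" using ge[of "Suc n"] that by linarith
      have "d n \<ge> \<phi> (d (Suc n)) * d (Suc n)"
        using K[of n "Suc n"] p unfolding d_def by simp
      moreover have "\<phi> (d (Suc n)) * d (Suc n) \<ge> c * d (Suc n)"
        using c(2)[OF ge[of "Suc n"]] p by (intro mult_right_mono) auto
      ultimately show ?thesis by linarith
    qed
    have pw: "d 0 \<ge> c ^ n * d n" for n
    proof (induction n)
      case 0 then show ?case by simp
    next
      case (Suc n)
      have "c ^ Suc n * d (Suc n) = c ^ n * (c * d (Suc n))" by simp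
      also have "\<dots> \<le> c ^ n * d n" using step[of n] c(1) by (intro mult_left_mono) auto
      finally show ?case using Suc by linarith
    qed
    obtain n where n: "d 0 / \<eta> < c ^ n" using real_arch_pow[OF c(1)] by blast
    then have "d 0 < c ^ n * \<eta>" using that by (simp add: divide_less_eq)
    also have "\<dots> \<le> c ^ n * d n" using ge[of n] c(1) by (intro mult_left_mono) auto
    finally show False using pw[of n] by linarith
  qed
  have C: "\<exists>N. \<forall>n\<ge>N. \<forall>k. \<sigma> (x n) (x (n + 2*k + 1)) < \<epsilon>" if e: "\<epsilon> > 0" for \<epsilon>
  proof -
    obtain c where c: "c > 1" "\<And>t. t \<ge> \<epsilon>/2 \<Longrightarrow> \<phi> t \<ge> c" using PB[of "\<epsilon>/2"] e by auto
    define e' where "e' = max (\<epsilon>/c) (\<epsilon>/2)"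
    have e'lt: "e' < \<epsilon>" unfolding e'_def using c(1) e by (auto simp: divide_less_eq)
    have e'ge: "e' \<ge> \<epsilon>/2" unfolding e'_def by simp
    define \<eta> where "\<eta> = (\<epsilon> - e') / 2"
    have eta: "\<eta> > 0" unfolding \<eta>_def using e'lt by simp
    obtain N where N: "d N < \<eta>" using dsmall[OF eta] by blast
    have dN: "n \<ge> N \<Longrightarrow> d n < \<eta>" for n using dmono2[of N n] N by linarith
    have one: "\<sigma> (x (Suc i)) (x (Suc j)) < e'" if "odd (i+j)" "\<sigma> (x i) (x j) < \<epsilon>" for i j
    proof (cases "\<sigma> (x (Suc i)) (x (Suc j)) < \<epsilon>/2")
      case True then show ?thesis unfolding e'_def by linarith
    next
      case False
      define t where "t = \<sigma> (x (Suc i)) (x (Suc j))"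
      have tge: "t \<ge> \<epsilon>/2" using False unfolding t_def by linarith
      have tp: "t > 0" using tge e by linarith
      have "\<sigma> (x i) (x j) \<ge> \<phi> t * t" using K[OF that(1)] tp unfolding t_def by blast
      moreover have "\<phi> t * t \<ge> c * t" using c(2)[OF tge] tp by (intro mult_right_mono) auto
      ultimately have "c * t < \<epsilon>" using that(2) by linarith
      then have "t < \<epsilon> / c" using c(1) by (simp add: less_divide_eq mult.commute)
      then show ?thesis unfolding e'_def t_def by linarith
    qed
    have "\<forall>n\<ge>N. \<forall>k. \<sigma> (x n) (x (n + 2*k + 1)) < \<epsilon>"
    proof (intro allI impI)
      fix n k assume nN: "n \<ge> N"
      show "\<sigma> (x n) (x (n + 2*k + 1)) < \<epsilon>"
      proof (induction k)
        case 0
        then show ?case using dN[OF nN] e'lt e'ge e unfolding d_def \<eta>_def by simp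
      next
        case (Suc k)
        have a: "\<sigma> (x (Suc n)) (x (Suc (n + 2*k + 1))) < e'"
          using one[of n "n + 2*k + 1"] Suc by simp
        have b: "\<sigma> (x (Suc (Suc n))) (x (Suc (Suc (n + 2*k + 1))))
              \<le> \<sigma> (x (Suc n)) (x (Suc (n + 2*k + 1)))"
          using K[of "Suc n" "Suc (n + 2*k + 1)"] by simp
        have t1: "\<sigma> (x n) (x (n + 2 * Suc k + 1)) \<le> \<sigma> (x n) (x (Suc n)) + \<sigma> (x (Suc n)) (x (n + 2 * Suc k + 1))"
          by (rule tri)
        have t2: "\<sigma> (x (Suc n)) (x (n + 2 * Suc k + 1)) \<le> \<sigma> (x (Suc n)) (x (Suc (Suc n))) + \<sigma> (x (Suc (Suc n))) (x (n + 2 * Suc k + 1))"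
          by (rule tri)
        have eq: "n + 2 * Suc k + 1 = Suc (Suc (n + 2*k + 1))" by simp
        have dd: "d n < \<eta>" "d (Suc n) < \<eta>" using dN nN by auto
        have "d n + d (Suc n) < \<epsilon> - e'" using add_strict_mono[OF dd] unfolding \<eta>_def by simp
        then have "\<sigma> (x n) (x (Suc n)) + \<sigma> (x (Suc n)) (x (Suc (Suc n))) < \<epsilon> - e'"
          unfolding d_def .
        then show ?case using t1 t2 a b unfolding eq by linarith
      qed
    qed
    then show ?thesis by blast
  qed
  have dl: "ml_double_limit \<sigma> x 0"
    unfolding ml_double_limit_def
  proof (intro allI impI)
    fix e :: real assume e: "e > 0"
    obtain N1 where N1: "\<And>n k. n \<ge> N1 \<Longrightarrow> \<sigma> (x n) (x (n + 2*k + 1)) < e/2"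
      using C[of "e/2"] e by auto
    obtain N2 where N2: "d N2 < e/2" using dsmall[of "e/2"] e by auto
    have dN: "n \<ge> N2 \<Longrightarrow> d n < e/2" for n using dmono2[of N2 n] N2 by linarith
    have main: "\<sigma> (x n) (x m) < e" if nm: "n \<ge> max N1 N2" "m \<ge> n" for n m
    proof -
      obtain j where m: "m = n + j" using nm(2) le_Suc_ex by blast
      show ?thesis
      proof (cases "odd j")
        case True
        then obtain k where "j = 2*k+1" using oddE by blast
        then show ?thesis using N1[of n k] nm e m by simp
      next
        case False
        show ?thesis
        proof (cases "j = 0")
          case True
          have "\<sigma> (x n) (x n) \<le> d n + d n"
            using tri[of "x n" "x n" "x (Suc n)"] unfolding d_def sym[of "x (Suc n)" "x n"] by linarith
          moreover have "d n < e/2" using dN[of n] nm by simp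
          ultimately show ?thesis using True m by simp
        next
          case j0: False
          from False obtain k' where k': "j = 2*k'" by (auto elim: evenE)
          with j0 have "k' \<noteq> 0" by simp
          then obtain k where "k' = Suc k" using not0_implies_Suc by blast
          then have "m = Suc n + 2*k + 1" using m k' by simp
          then have l1: "\<sigma> (x (Suc n)) (x m) < e/2" using N1[of "Suc n" k] nm by simp
          have l2: "d n < e/2" using dN[of n] nm by simp
          have "\<sigma> (x n) (x m) \<le> d n + \<sigma> (x (Suc n)) (x m)"
            using tri[of "x n" "x m" "x (Suc n)"] unfolding d_def .
          then show ?thesis using l1 l2 by linarith
        qed
      qed
    qed
    show "\<exists>N. \<forall>n\<ge>N. \<forall>m\<ge>N. \<bar>\<sigma> (x n) (x m) - 0\<bar> < e"
    proof (intro exI allI impI)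
      fix n m assume "n \<ge> max N1 N2" "m \<ge> max N1 N2"
      show "\<bar>\<sigma> (x n) (x m) - 0\<bar> < e"
      proof (cases "n \<le> m")
        case True
        then show ?thesis using main[of n m] nn[of "x n" "x m"] \<open>n \<ge> max N1 N2\<close> by simp
      next
        case False
        then show ?thesis using main[of m n] sym[of "x n" "x m"] nn[of "x n" "x m"] \<open>m \<ge> max N1 N2\<close> by simp
      qed
    qed
  qed
  then have "ml_Cauchy \<sigma> x" unfolding ml_Cauchy_def by blast
  then obtain p where p1: "ml_double_limit \<sigma> x (\<sigma> p p)" and p2: "ml_converges \<sigma> x p"
    using assms(2) unfolding ml_complete_def by blast
  have pp: "\<sigma> p p = 0"
  proof (rule ccontr)
    assume ne: "\<sigma> p p \<noteq> 0"
    define e where "e = \<bar>\<sigma> p p\<bar> / 2"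
    have e: "e > 0" using ne unfolding e_def by simp
    obtain N1 where "\<forall>n\<ge>N1. \<forall>m\<ge>N1. \<bar>\<sigma> (x n) (x m) - \<sigma> p p\<bar> < e"
      using p1 e unfolding ml_double_limit_def by blast
    moreover obtain N2 where "\<forall>n\<ge>N2. \<forall>m\<ge>N2. \<bar>\<sigma> (x n) (x m) - 0\<bar> < e"
      using dl e unfolding ml_double_limit_def by blast
    ultimately have "\<bar>\<sigma> (x (max N1 N2)) (x (max N1 N2)) - \<sigma> p p\<bar> < e"
      "\<bar>\<sigma> (x (max N1 N2)) (x (max N1 N2)) - 0\<bar> < e" by auto
    then show False unfolding e_def by linarith
  qed
  have xp: "(\<lambda>n. \<sigma> (x n) p) \<longlonglongrightarrow> 0" using p2 pp unfolding ml_converges_def by simp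
  have small: "a = b" if "\<And>e. e > 0 \<Longrightarrow> \<sigma> a b < e" for a b
  proof -
    have "\<not> \<sigma> a b > 0" using that[of "\<sigma> a b"] by auto
    then have "\<sigma> a b = 0" using nn[of a b] by linarith
    then show ?thesis using z by blast
  qed
  obtain v where v: "p = S v" using assms(5) by (metis surjD)
  obtain u where u: "p = T u" using assms(6) by (metis surjD)
  have Sp: "S p = p"
  proof -
    have "p = v"
    proof (rule small)
      fix e :: real assume e: "e > 0"
      obtain N where N: "\<And>n. n \<ge> N \<Longrightarrow> \<sigma> (x n) p < e/2"
        using order_tendstoD(2)[OF xp, of "e/2"] e unfolding eventually_sequentially by auto
      have a: "\<sigma> (x (2*N)) p < e/2" and b: "\<sigma> (x (Suc (2*N))) p < e/2" using N by auto
      have "\<sigma> (x (Suc (2*N))) v \<le> \<sigma> (x (2*N)) p"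
      proof -
        have h1: "T (x (Suc (2*N))) = x (2*N)" using xT[of "2*N"] by simp
        have "\<sigma> (x (Suc (2*N))) v \<le> \<sigma> (T (x (Suc (2*N)))) (S v)" by (rule Hw)
        then show ?thesis unfolding h1 v[symmetric] .
      qed
      then show "\<sigma> p v < e" using tri[of p v "x (Suc (2*N))"] sym[of p "x (Suc (2*N))"] a b by linarith
    qed
    then show ?thesis using v by (metis)
  qed
  have Tp: "T p = p"
  proof -
    have "u = p"
    proof (rule small)
      fix e :: real assume e: "e > 0"
      obtain N where N: "\<And>n. n \<ge> N \<Longrightarrow> \<sigma> (x n) p < e/2"
        using order_tendstoD(2)[OF xp, of "e/2"] e unfolding eventually_sequentially by auto
      have a: "\<sigma> (x (Suc (2*N))) p < e/2" and b: "\<sigma> (x (Suc (Suc (2*N)))) p < e/2" using N by auto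
      have "\<sigma> u (x (Suc (Suc (2*N)))) \<le> \<sigma> p (x (Suc (2*N)))"
      proof -
        have h1: "S (x (Suc (Suc (2*N)))) = x (Suc (2*N))" using xSS[of "Suc (2*N)"] by simp
        have "\<sigma> u (x (Suc (Suc (2*N)))) \<le> \<sigma> (T u) (S (x (Suc (Suc (2*N)))))" by (rule Hw)
        then show ?thesis unfolding h1 u[symmetric] .
      qed
      then show "\<sigma> u p < e" using tri[of u p "x (Suc (Suc (2*N)))"] sym[of p "x (Suc (2*N))"] a b by linarith
    qed
    then show ?thesis using u by (metis)
  qed
  show ?thesis using Sp Tp by blast
qed

thm_deps corollary2p6

end
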